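(* Let $G'=(V',W',E')$ be a bipartite graph with $|V'|=|W'|=k$ and maximum matching size $\mathrm{OPT}'$, let $b\ge1$ be an integer, and let $\rho\ge1$. Form $G=(V,W,E)$ by taking $b$ copies of each vertex of $V'$, setting $W=W'$ with every good having supply $b$, and connecting every copy of $v'$ to $w'$ whenever $(v',w')\in E'$. Let $M^*$ be a many-to-one matching in $G$ (each vertex of $V$ matched to at most one good, each good matched to at most $b$ vertices) with $|M^*|\ge b\,\mathrm{OPT}'/\rho$. For each $v'\in V'$ independently, choose one of its $b$ copies uniformly at random and take that copy's edge in $M^*$ (if any), viewed as an edge of $G'$; if several chosen edges share a good, keep only one of them. Then the resulting matching of $G'$ has expected size at least $\mathrm{OPT}'/(3\rho)$. *)

theory Defs
  imports Complex_Main "HOL-Library.FuncSet"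
begin

definition is_matching :: "('a \<times> 'b) set \<Rightarrow> ('a \<times> 'b) set \<Rightarrow> bool" where
  "is_matching E M \<longleftrightarrow> M \<subseteq> E \<and>
     (\<forall>v. card {w. (v, w) \<in> M} \<le> 1) \<and> (\<forall>w. card {v. (v, w) \<in> M} \<le> 1)"

definition max_matching_size :: "('a \<times> 'b) set \<Rightarrow> nat" where
  "max_matching_size E = Max (card ` {M. is_matching E M})"

definition blowup_edges :: "nat \<Rightarrow> ('a \<times> 'b) set \<Rightarrow> (('a \<times> nat) \<times> 'b) set" where
  "blowup_edges b E = {((v, i), w). (v, w) \<in> E \<and> i < b}"

definition is_many_to_one_matching ::
  "nat \<Rightarrow> ('c \<times> 'b) set \<Rightarrow> ('c \<times> 'b) set \<Rightarrow> bool" where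
  "is_many_to_one_matching b E M \<longleftrightarrow> M \<subseteq> E \<and>
     (\<forall>v. card {w. (v, w) \<in> M} \<le> 1) \<and> (\<forall>w. card {v. (v, w) \<in> M} \<le> b)"

definition chosen_edges :: "'a set \<Rightarrow> (('a \<times> nat) \<times> 'b) set \<Rightarrow> ('a \<Rightarrow> nat) \<Rightarrow> ('a \<times> 'b) set" where
  "chosen_edges V M c = {(v, w). v \<in> V \<and> ((v, c v), w) \<in> M}"

(* Size of the resulting matching after keeping only one edge per shared good:
   the number of distinct goods covered by the chosen edges. *)
definition rounded_size :: "'a set \<Rightarrow> (('a \<times> nat) \<times> 'b) set \<Rightarrow> ('a \<Rightarrow> nat) \<Rightarrow> nat" where
  "rounded_size V M c = card (snd ` chosen_edges V M c)"

(* Expected size when each v in V independently picks a copy uniformly from {0..<b}: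
   uniform average over all choice functions in PiE V (\<lambda>_. {..<b}). *)
definition expected_rounded_size :: "nat \<Rightarrow> 'a set \<Rightarrow> (('a \<times> nat) \<times> 'b) set \<Rightarrow> real" where
  "expected_rounded_size b V M =
     (\<Sum>c\<in>PiE V (\<lambda>_. {..<b}). real (rounded_size V M c)) / real (card (PiE V (\<lambda>_. {..<b})))"

end

theory Submission
  imports Defs
begin

lemma prod_bound:
  fixes x :: "'a \<Rightarrow> real"
  assumes "finite S" "\<forall>v\<in>S. 0 \<le> x v \<and> x v \<le> 1"
  shows "(\<Prod>v\<in>S. 1 - x v) \<le> 1 - sum x S + (sum x S)^2/2"
  using assms
proof (induction S rule: finite_induct)
  case empty
  then show ?case by simp
next
  case (insert a F)
  define s where "s = sum x F"
  define y where "y = x a"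
  have s0: "0 \<le> s" unfolding s_def using insert by (simp add: sum_nonneg)
  have y: "0 \<le> y" "y \<le> 1" using insert.prems unfolding y_def by auto
  have IH: "(\<Prod>v\<in>F. 1 - x v) \<le> 1 - s + s^2/2" using insert s_def by simp
  have "(\<Prod>v\<in>insert a F. 1 - x v) = (1 - y) * (\<Prod>v\<in>F. 1 - x v)"
    using insert y_def by simp
  also have "\<dots> \<le> (1 - y) * (1 - s + s^2/2)"
    using IH y by (intro mult_left_mono) auto
  also have "\<dots> = 1 - (y + s) + (y+s)^2/2 - (y^2/2 + y*s^2/2)"
    by (simp add: field_simps power2_eq_square)
  also have "\<dots> \<le> 1 - (y + s) + (y+s)^2/2"
  proof -
    have "0 \<le> y*s^2" "0 \<le> y^2" using y by auto
    then show ?thesis by linarith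
  qed
  finally show ?case using insert s_def y_def by simp
qed

lemma card_filter_real:
  assumes "finite A"
  shows "real (card {x\<in>A. P x}) = (\<Sum>x\<in>A. if P x then 1 else 0)"
  using assms by (simp add: sum.If_cases Int_def)

theorem lemma3:
  fixes V' :: "'a set" and W' :: "'b set" and E' :: "('a \<times> 'b) set"
    and k b :: nat and \<rho> :: real and Mstar :: "(('a \<times> nat) \<times> 'b) set"
  assumes "finite V'" and "finite W'"
    and "card V' = k" and "card W' = k"
    and "E' \<subseteq> V' \<times> W'"
    and "b \<ge> 1" and "\<rho> \<ge> 1"
    and "is_many_to_one_matching b (blowup_edges b E') Mstar"
    and "card Mstar \<ge> real b * real (max_matching_size E') / \<rho>"
  shows "expected_rounded_size b V' Mstar \<ge> real (max_matching_size E') / (3 * \<rho>)"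
proof -
  define M where "M = Mstar"
  define B where "B = PiE V' (\<lambda>_. {..<b::nat})"
  define OPT where "OPT = max_matching_size E'"
  define n where "n v w = card {i\<in>{..<b}. ((v,i),w)\<in>M}" for v w
  define d where "d w = card {u. (u,w)\<in>M}" for w
  define cov where "cov w = {c\<in>B. \<exists>v\<in>V'. ((v,c v),w)\<in>M}" for w
  have Msub: "\<And>v i w. ((v,i),w)\<in>M \<Longrightarrow> v\<in>V' \<and> i<b \<and> w\<in>W'"
    using assms(5,8) unfolding M_def is_many_to_one_matching_def blowup_edges_def by auto
  have MsubS: "M \<subseteq> (V' \<times> {..<b}) \<times> W'" using Msub by auto
  have finM: "finite M" using MsubS assms(1,2) finite_subset by blast
  have dle: "d w \<le> b" for w using assms(8) unfolding d_def M_def is_many_to_one_matching_def by blast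
  have finB: "finite B" unfolding B_def using assms(1) by (simp add: finite_PiE)
  have cardB: "card B = b ^ card V'" unfolding B_def using assms(1) by (simp add: card_PiE)
  have Bpos: "card B > 0" using cardB assms(6) by simp
  have key1: "rounded_size V' M c = (\<Sum>w\<in>W'. if (\<exists>v\<in>V'. ((v,c v),w)\<in>M) then 1 else 0)" for c
  proof -
    have "snd ` chosen_edges V' M c = W' \<inter> {w. \<exists>v\<in>V'. ((v,c v),w)\<in>M}"
      unfolding chosen_edges_def using Msub by force
    then show ?thesis unfolding rounded_size_def using sum.inter_restrict[OF assms(2), of "\<lambda>_. 1::nat" "{w. \<exists>v\<in>V'. ((v,c v),w)\<in>M}"] by simp
  qed
  have key2: "(\<Sum>c\<in>B. real (rounded_size V' M c)) = (\<Sum>w\<in>W'. real (card (cov w)))"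
  proof -
    have "(\<Sum>c\<in>B. real (rounded_size V' M c))
        = (\<Sum>c\<in>B. \<Sum>w\<in>W'. if (\<exists>v\<in>V'. ((v,c v),w)\<in>M) then 1 else 0)"
      by (auto simp: key1 of_nat_sum intro!: sum.cong)
    also have "\<dots> = (\<Sum>w\<in>W'. \<Sum>c\<in>B. if (\<exists>v\<in>V'. ((v,c v),w)\<in>M) then 1 else 0)"
      by (rule sum.swap)
    also have "\<dots> = (\<Sum>w\<in>W'. real (card (cov w)))"
      unfolding cov_def by (intro sum.cong refl) (simp add: card_filter_real[OF finB])
    finally show ?thesis .
  qed
  have nle: "n v w \<le> b" for v w
    unfolding n_def by (metis (no_types, lifting) card_lessThan card_mono finite_lessThan mem_Collect_eq subsetI)
  have cdiff: "card ({..<b} - {i. i<b \<and> P i}) = b - card {i. i<b \<and> P i}" for P :: "nat \<Rightarrow> bool"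
    by (subst card_Diff_subset) auto
  have key3: "card (B - cov w) = (\<Prod>v\<in>V'. b - n v w)" for w
  proof -
    have "B - cov w = PiE V' (\<lambda>v. {..<b} - {i\<in>{..<b}. ((v,i),w)\<in>M})"
      unfolding B_def cov_def by (auto simp: PiE_iff)
    then show ?thesis using assms(1) unfolding n_def
      by (simp add: card_PiE cdiff)
  qed
  have key3r: "real (card (cov w)) / real (card B) = 1 - (\<Prod>v\<in>V'. 1 - real (n v w) / real b)" for w
  proof -
    have sub: "cov w \<subseteq> B" unfolding cov_def by auto
    have "card (B - cov w) = card B - card (cov w)"
      using sub finB by (simp add: card_Diff_subset finite_subset)
    moreover have "card (cov w) \<le> card B" using sub finB card_mono by blast
    ultimately have "real (card (cov w)) = real (card B) - real (\<Prod>v\<in>V'. b - n v w)"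
      using key3[of w] by simp
    also have "real (\<Prod>v\<in>V'. b - n v w) = (\<Prod>v\<in>V'. real b - real (n v w))"
      using nle by (simp add: of_nat_diff)
    finally have "real (card (cov w)) / real (card B) = 1 - (\<Prod>v\<in>V'. real b - real (n v w)) / real (card B)"
      using Bpos by (simp add: diff_divide_distrib)
    also have "(\<Prod>v\<in>V'. real b - real (n v w)) / real (card B) = (\<Prod>v\<in>V'. (real b - real (n v w)) / real b)"
      unfolding cardB by (simp add: prod_dividef)
    also have "\<dots> = (\<Prod>v\<in>V'. 1 - real (n v w) / real b)"
      using assms(6) by (intro prod.cong) (auto simp: diff_divide_distrib)
    finally show ?thesis .
  qed
  have key4: "(\<Sum>v\<in>V'. n v w) = d w" for w
  proof -
    have "{u. (u,w)\<in>M} = Sigma V' (\<lambda>v. {i\<in>{..<b}. ((v,i),w)\<in>M})"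
      using Msub by auto
    then show ?thesis unfolding d_def n_def using assms(1) by (simp add: card_SigmaI)
  qed
  have key5: "(\<Sum>w\<in>W'. d w) = card M"
  proof -
    define S where "S = Sigma W' (\<lambda>w. {u. (u,w)\<in>M})"
    have eq: "(\<lambda>(w,u). (u,w)) ` S = M"
      unfolding S_def using Msub by force
    have inj: "inj_on (\<lambda>(w,u). (u,w)) S"
      by (auto simp: inj_on_def)
    have fin: "finite {u. (u,w)\<in>M}" for w
      using finite_imageI[OF finM, of fst] by (rule finite_subset[rotated]) force
    have "card M = card S" using card_image[OF inj] eq by simp
    also have "\<dots> = (\<Sum>w\<in>W'. d w)" unfolding S_def d_def using assms(2) fin by simp
    finally show ?thesis by simp
  qed
  have key6: "real (card (cov w)) / real (card B) \<ge> real (d w) / (2 * real b)" for w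
  proof -
    define x where "x v = real (n v w) / real b" for v
    have x01: "\<forall>v\<in>V'. 0 \<le> x v \<and> x v \<le> 1" using nle assms(6) unfolding x_def by simp
    have sx: "sum x V' = real (d w) / real b"
      unfolding x_def using key4[of w] by (simp add: sum_divide_distrib[symmetric] flip: of_nat_sum)
    have s01: "0 \<le> sum x V'" "sum x V' \<le> 1" using sx dle[of w] assms(6) by auto
    have "(\<Prod>v\<in>V'. 1 - x v) \<le> 1 - sum x V' + (sum x V')^2/2"
      by (rule prod_bound[OF assms(1) x01])
    also have "\<dots> \<le> 1 - sum x V' / 2"
      using s01 mult_left_le[of "sum x V'" "sum x V'"] by (simp add: power2_eq_square)
    finally have "1 - (\<Prod>v\<in>V'. 1 - x v) \<ge> sum x V' / 2" by simp
    then show ?thesis using key3r[of w] sx unfolding x_def by simp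
  qed
  have "expected_rounded_size b V' Mstar = (\<Sum>w\<in>W'. real (card (cov w)) / real (card B))"
    unfolding expected_rounded_size_def M_def[symmetric] B_def[symmetric] key2
    by (simp add: sum_divide_distrib)
  also have "\<dots> \<ge> (\<Sum>w\<in>W'. real (d w) / (2 * real b))"
    by (rule sum_mono[OF key6])
  finally have E: "expected_rounded_size b V' Mstar \<ge> real (card M) / (2 * real b)"
    using key5 by (simp add: sum_divide_distrib[symmetric] flip: of_nat_sum)
  have F1: "real (card M) / (2 * real b) \<ge> (real b * real OPT / \<rho>) / (2 * real b)"
    using assms(9) assms(6) unfolding M_def OPT_def by (intro divide_right_mono) auto
  have F2: "(real b * real OPT / \<rho>) / (2 * real b) = real OPT / (2 * \<rho>)"
    using assms(6) by simp
  have F3: "real OPT / (2 * \<rho>) \<ge> real OPT / (3 * \<rho>)"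
    using assms(7) by (intro divide_left_mono) auto
  show ?thesis using E F1 F2 F3 unfolding OPT_def by linarith
qed

end
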